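(* Let $n\ge2$, $\mathbf p^0\in\Delta_n$, $\mathbf p^{t+1}=F(\mathbf p^t)$. Then the sequence $L^t=\sum_{k=1}^n(p^t_k)^2$, $t=0,1,\dots$, is (non-strictly) decreasing: $L^{t+1}\le L^t$ for all $t$.
   Context: $\Delta_n=\{\mathbf p\in\mathbb R^n: p_i\ge 0,\ \sum_i p_i=1\}$. For $\mathbf p\in\Delta_n$, $L(\mathbf p)=\sum_{k}p_k^2$ and $F(\mathbf p)_i=p_i\frac{n-p_i}{n-L(\mathbf p)}$. *)

theory Defs
  imports Complex_Main
begin

text \<open>Vectors in R^n are represented as functions nat => real; only indices 0..n-1 matter.\<close>

definition simplex :: "nat \<Rightarrow> (nat \<Rightarrow> real) set" where
  "simplex n = {p. (\<forall>i<n. p i \<ge> 0) \<and> (\<Sum>i<n. p i) = 1}"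

definition Lfun :: "nat \<Rightarrow> (nat \<Rightarrow> real) \<Rightarrow> real" where
  "Lfun n p = (\<Sum>k<n. (p k)^2)"

definition Fmap :: "nat \<Rightarrow> (nat \<Rightarrow> real) \<Rightarrow> (nat \<Rightarrow> real)" where
  "Fmap n p = (\<lambda>i. p i * (real n - p i) / (real n - Lfun n p))"

end

theory Submission
  imports Defs
begin

lemma step:
  fixes n :: nat and p :: "nat \<Rightarrow> real"
  assumes n2: "n \<ge> 2" and sp: "p \<in> simplex n"
  shows "Fmap n p \<in> simplex n \<and> Lfun n (Fmap n p) \<le> Lfun n p"
proof -
  have nn: "\<And>i. i < n \<Longrightarrow> p i \<ge> 0" and s1: "(\<Sum>i<n. p i) = 1"
    using sp by (auto simp: simplex_def)
  have le1: "p i \<le> 1" if "i < n" for i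
  proof -
    have "p i \<le> (\<Sum>i<n. p i)"
      by (rule member_le_sum) (use that nn in auto)
    thus ?thesis using s1 by simp
  qed
  define L where "L = Lfun n p"
  have L0: "L \<ge> 0" unfolding L_def Lfun_def by (simp add: sum_nonneg)
  have "L \<le> (\<Sum>i<n. p i)" unfolding L_def Lfun_def
    by (rule sum_mono) (use nn le1 in \<open>auto simp: power2_eq_square intro: mult_left_le\<close>)
  hence L1: "L \<le> 1" using s1 by simp
  have rn: "real n \<ge> 2" using n2 by simp
  define D where "D = real n - L"
  have D0: "D > 0" using L1 rn D_def by simp
  have F: "Fmap n p = (\<lambda>i. p i * (real n - p i) / D)"
    unfolding Fmap_def D_def L_def by simp
  have sumF: "(\<Sum>i<n. p i * (real n - p i)) = D"
  proof -
    have "(\<Sum>i<n. p i * (real n - p i)) = real n * (\<Sum>i<n. p i) - (\<Sum>i<n. (p i)^2)"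
      by (simp add: algebra_simps power2_eq_square sum_subtractf sum_distrib_left)
    thus ?thesis using s1 by (simp add: D_def L_def Lfun_def)
  qed
  have simp: "Fmap n p \<in> simplex n"
    unfolding simplex_def F
  proof (intro CollectI conjI allI impI)
    fix i assume "i < n"
    hence "p i \<ge> 0" "real n - p i \<ge> 0" using nn le1 rn by (auto, smt (verit) le1)
    thus "0 \<le> p i * (real n - p i) / D" using D0 by simp
  next
    show "(\<Sum>i<n. p i * (real n - p i) / D) = 1"
      using sumF D0 by (simp add: sum_divide_distrib[symmetric])
  qed
  define g where "g x = x * (real n - x)^2" for x :: real
  define g' where "g' x = (real n - x)^2 - 2 * x * (real n - x)" for x :: real
  have tang: "p i * g (p i) \<le> p i * (g L + g' L * (p i - L))" if "i < n" for i
  proof -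
    have e: "g L + g' L * (p i - L) - g (p i) = (p i - L)^2 * (2 * real n - p i - 2 * L)"
      unfolding g_def g'_def by (simp add: algebra_simps power2_eq_square)
    have "(p i - L)^2 * (2 * real n - p i - 2 * L) \<ge> 0"
      using le1[OF that] L1 rn by (intro mult_nonneg_nonneg) auto
    hence "g (p i) \<le> g L + g' L * (p i - L)" using e by linarith
    thus ?thesis using nn[OF that] by (rule mult_left_mono)
  qed
  have "(\<Sum>i<n. p i * g (p i)) \<le> (\<Sum>i<n. p i * (g L + g' L * (p i - L)))"
    by (rule sum_mono) (use tang in auto)
  also have "\<dots> = g L * (\<Sum>i<n. p i) + g' L * ((\<Sum>i<n. (p i)^2) - L * (\<Sum>i<n. p i))"
    by (simp add: algebra_simps power2_eq_square sum.distrib sum_distrib_left sum_subtractf)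
  also have "\<dots> = g L" using s1 by (simp add: L_def Lfun_def)
  finally have key: "(\<Sum>i<n. p i * g (p i)) \<le> g L" .
  have "Lfun n (Fmap n p) = (\<Sum>i<n. p i * g (p i)) / D^2"
    unfolding Lfun_def F g_def
    by (simp add: sum_divide_distrib power_divide power_mult_distrib power2_eq_square algebra_simps)
  also have "\<dots> \<le> g L / D^2" using key D0 by (simp add: divide_right_mono)
  also have "\<dots> = L" unfolding g_def D_def[symmetric] using D0 by simp
  finally show ?thesis using simp L_def by simp
qed

theorem lemma1:
  fixes n :: nat and p :: "nat \<Rightarrow> nat \<Rightarrow> real"
  assumes "n \<ge> 2"
    and "p 0 \<in> simplex n"
    and "\<And>t. p (Suc t) = Fmap n (p t)"
  shows "\<forall>t. Lfun n (p (Suc t)) \<le> Lfun n (p t)"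
proof
  fix t
  have "p t \<in> simplex n"
    by (induction t) (use assms step in auto)
  thus "Lfun n (p (Suc t)) \<le> Lfun n (p t)" using assms step by simp
qed

end
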